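(* Let $\alpha,\beta,\gamma\in\mathbb{F}\setminus\{\frac12\}$, and let $\mathbf{A}$ be the 5-dimensional LV algebra with natural basis $e_1,\dots,e_5$ in which $e_1e_2=\alpha e_1+(1-\alpha)e_2$, $e_1e_5=\gamma e_1+(1-\gamma)e_5$, $e_2e_5=\beta e_2+(1-\beta)e_5$, and $e_ie_j=\frac12(e_i+e_j)$ for all other pairs $i,j$. Then $\mathrm{Der}(\mathbf{A})=\{f\in L(\mathbf{A}) : \mathrm{Im}(f)\subseteq\langle e_3-e_4\rangle \text{ and } f(e_1)=f(e_2)=f(e_5)\}$.
   Context: Let $\mathbb{F}$ be a field of characteristic different from $2$. A Lotka–Volterra (LV) algebra of dimension $5$ over $\mathbb{F}$ is a commutative (not necessarily associative) $\mathbb{F}$-algebra $\mathbf{A}$ with a basis $e_1,\dots,e_5$ (the natural basis) such that $e_ie_j=\alpha_{ij}e_i+\alpha_{ji}e_j$ with $\alpha_{ij}\in\mathbb{F}$, $\alpha_{ii}=\frac12$ and $\alpha_{ij}+\alpha_{ji}=1$ for all $i,j$. A derivation is a linear map $D:\mathbf{A}\to\mathbf{A}$ with $D(uv)=D(u)v+uD(v)$ for all $u,v$; $\mathrm{Der}(\mathbf{A})$ is the set of derivations, $L(\mathbf{A})$ the set of linear maps $\mathbf{A}\to\mathbf{A}$, and $\langle x_1,\dots,x_k\rangle$ the linear span. *)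

theory Defs
  imports Main
begin

text \<open>Vectors of the 5-dimensional algebra are represented as functions
  nat => 'a supported on the index set {1..5}; e k is the k-th natural basis vector.\<close>

definition LV_space :: "(nat \<Rightarrow> 'a::field) set" where
  "LV_space = {u. \<forall>k. k \<notin> {1..5} \<longrightarrow> u k = 0}"

definition ebasis :: "nat \<Rightarrow> nat \<Rightarrow> 'a::field" where
  "ebasis k = (\<lambda>i. if i = k then 1 else 0)"

definition vscale :: "'a::field \<Rightarrow> (nat \<Rightarrow> 'a) \<Rightarrow> nat \<Rightarrow> 'a" where
  "vscale c u = (\<lambda>i. c * u i)"

definition vadd :: "(nat \<Rightarrow> 'a::field) \<Rightarrow> (nat \<Rightarrow> 'a) \<Rightarrow> nat \<Rightarrow> 'a" where
  "vadd u v = (\<lambda>i. u i + v i)"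

definition vsub :: "(nat \<Rightarrow> 'a::field) \<Rightarrow> (nat \<Rightarrow> 'a) \<Rightarrow> nat \<Rightarrow> 'a" where
  "vsub u v = (\<lambda>i. u i - v i)"

text \<open>Structure constants: a i j is alpha_ij, so that e_i e_j = alpha_ij e_i + alpha_ji e_j.\<close>
definition is_LV_constants :: "(nat \<Rightarrow> nat \<Rightarrow> 'a::field) \<Rightarrow> bool" where
  "is_LV_constants a \<longleftrightarrow> (\<forall>i\<in>{1..5}. \<forall>j\<in>{1..5}. a i i = 1/2 \<and> a i j + a j i = 1)"

text \<open>Bilinear extension of e_i e_j = a i j e_i + a j i e_j.\<close>
definition LV_mult :: "(nat \<Rightarrow> nat \<Rightarrow> 'a::field) \<Rightarrow> (nat \<Rightarrow> 'a) \<Rightarrow> (nat \<Rightarrow> 'a) \<Rightarrow> nat \<Rightarrow> 'a" where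
  "LV_mult a u v = (\<lambda>k. if k \<in> {1..5}
      then (\<Sum>i\<in>{1..5}. \<Sum>j\<in>{1..5}. u i * v j *
              ((if k = i then a i j else 0) + (if k = j then a j i else 0)))
      else 0)"

definition LV_linear :: "((nat \<Rightarrow> 'a::field) \<Rightarrow> (nat \<Rightarrow> 'a)) \<Rightarrow> bool" where
  "LV_linear f \<longleftrightarrow> (\<forall>u\<in>LV_space. f u \<in> LV_space)
     \<and> (\<forall>u\<in>LV_space. \<forall>v\<in>LV_space. f (vadd u v) = vadd (f u) (f v))
     \<and> (\<forall>c. \<forall>u\<in>LV_space. f (vscale c u) = vscale c (f u))"

definition LV_Der :: "(nat \<Rightarrow> nat \<Rightarrow> 'a::field) \<Rightarrow> ((nat \<Rightarrow> 'a) \<Rightarrow> (nat \<Rightarrow> 'a)) set" where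
  "LV_Der a = {f. LV_linear f \<and> (\<forall>u\<in>LV_space. \<forall>v\<in>LV_space.
       f (LV_mult a u v) = vadd (LV_mult a (f u) v) (LV_mult a u (f v)))}"

definition thm6_consts :: "'a::field \<Rightarrow> 'a \<Rightarrow> 'a \<Rightarrow> nat \<Rightarrow> nat \<Rightarrow> 'a" where
  "thm6_consts \<alpha> \<beta> \<gamma> i j =
     (if (i, j) = (1, 2) then \<alpha> else if (i, j) = (2, 1) then 1 - \<alpha>
      else if (i, j) = (1, 5) then \<gamma> else if (i, j) = (5, 1) then 1 - \<gamma>
      else if (i, j) = (2, 5) then \<beta> else if (i, j) = (5, 2) then 1 - \<beta>
      else 1/2)"

end

theory Submission
  imports Defs
begin
lemma I5: "{1..5::nat} = {1,2,3,4,5}" by auto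
lemma I5s: "{Suc 0..5} = {1,2,3,4,5}" by auto

lemma mult_ee: "i \<in> {1..5} \<Longrightarrow> j \<in> {1..5} \<Longrightarrow> LV_mult a (ebasis i) (ebasis j) =
  vadd (vscale (a i j) (ebasis i)) (vscale (a j i) (ebasis j))"
  unfolding LV_mult_def ebasis_def I5 vadd_def vscale_def by (auto simp: fun_eq_iff)

lemma mult_right: "j \<in> {1..5} \<Longrightarrow> k \<in> {1..5} \<Longrightarrow> LV_mult a u (ebasis j) k =
  (\<Sum>i\<in>{1..5}. u i * ((if k = i then a i j else 0) + (if k = j then a j i else 0)))"
  unfolding LV_mult_def ebasis_def I5 by auto

lemma mult_left: "i \<in> {1..5} \<Longrightarrow> k \<in> {1..5} \<Longrightarrow> LV_mult a (ebasis i) v k =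
  (\<Sum>j\<in>{1..5}. v j * ((if k = i then a i j else 0) + (if k = j then a j i else 0)))"
  unfolding LV_mult_def ebasis_def I5 by auto

lemma eb_sp: "j \<in> {1..5} \<Longrightarrow> ebasis j \<in> LV_space"
  unfolding LV_space_def ebasis_def by auto
lemma sc_sp: "u \<in> LV_space \<Longrightarrow> vscale c u \<in> LV_space"
  unfolding LV_space_def vscale_def by auto
lemma add_sp: "u \<in> LV_space \<Longrightarrow> v \<in> LV_space \<Longrightarrow> vadd u v \<in> LV_space"
  unfolding LV_space_def vadd_def by auto

lemma deriv_eq:
  assumes f: "f \<in> LV_Der a" and ij: "i \<in> {1..5}" "j \<in> {1..5}"
  shows "a i j * f (ebasis i) k + a j i * f (ebasis j) k =
     LV_mult a (f (ebasis i)) (ebasis j) k + LV_mult a (ebasis i) (f (ebasis j)) k"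
proof -
  have L: "LV_linear f" and D: "\<And>u v. u \<in> LV_space \<Longrightarrow> v \<in> LV_space \<Longrightarrow>
       f (LV_mult a u v) = vadd (LV_mult a (f u) v) (LV_mult a u (f v))"
    using f unfolding LV_Der_def by auto
  have "f (LV_mult a (ebasis i) (ebasis j)) = vadd (vscale (a i j) (f (ebasis i))) (vscale (a j i) (f (ebasis j)))"
    using L ij unfolding mult_ee[OF ij] LV_linear_def by (simp add: sc_sp eb_sp)
  with D[OF eb_sp eb_sp, OF ij] show ?thesis
    by (metis vadd_def vscale_def)
qed

lemma decomp:
  assumes L: "LV_linear f" and u: "u \<in> LV_space"
  shows "f u = (\<lambda>k. \<Sum>j\<in>{1..5}. u j * f (ebasis j) k)"
proof -
  let ?t = "\<lambda>j. vscale (u j) (ebasis j)"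
  have ts: "\<And>j. j \<in> {1..5} \<Longrightarrow> ?t j \<in> LV_space" by (simp add: sc_sp eb_sp)
  have U: "u = vadd (?t 1) (vadd (?t 2) (vadd (?t 3) (vadd (?t 4) (?t 5))))"
    using u unfolding LV_space_def vadd_def vscale_def ebasis_def
    by (auto simp: fun_eq_iff)
  have A: "\<And>x y. x \<in> LV_space \<Longrightarrow> y \<in> LV_space \<Longrightarrow> f (vadd x y) = vadd (f x) (f y)"
   and S: "\<And>c x. x \<in> LV_space \<Longrightarrow> f (vscale c x) = vscale c (f x)"
    using L unfolding LV_linear_def by auto
  have "f u = vadd (f (?t 1)) (vadd (f (?t 2)) (vadd (f (?t 3)) (vadd (f (?t 4)) (f (?t 5)))))"
    by (subst U) (simp add: A S add_sp ts)
  also have "\<dots> = (\<lambda>k. \<Sum>j\<in>{1..5}. u j * f (ebasis j) k)"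
    by (simp add: S eb_sp) (simp add: I5s vadd_def vscale_def fun_eq_iff add.assoc)
  finally show ?thesis .
qed

lemma S5: "sum g {1..5::nat} = g 1 + g 2 + g 3 + g 4 + g 5"
  unfolding I5 by (simp add: add.assoc)

lemma deriv_coord:
  assumes f: "f \<in> LV_Der a" and ij: "i \<in> {1..5}" "j \<in> {1..5}" "k \<in> {1..5}"
  shows "a i j * f (ebasis i) k + a j i * f (ebasis j) k =
     (\<Sum>m\<in>{1..5}. f (ebasis i) m * ((if k = m then a m j else 0) + (if k = j then a j m else 0)))
   + (\<Sum>m\<in>{1..5}. f (ebasis j) m * ((if k = i then a i m else 0) + (if k = m then a m i else 0)))"
  using deriv_eq[OF f ij(1,2), of k] unfolding mult_left[OF ij(1,3)] mult_right[OF ij(2,3)] .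

lemmas EV = prod.inject numeral_eq_iff one_eq_numeral_iff numeral_eq_one_iff Num.eq_num_simps
     if_True if_False simp_thms atLeastAtMost_iff le_num_simps numeral_le_iff one_le_numeral numeral_le_one_iff
     mult_zero_right mult_zero_left add_0_right add_0_left le_numeral_extra

lemma der_basis: fixes \<alpha> \<beta> \<gamma> :: "'a::field"
  assumes f: "f \<in> LV_Der (thm6_consts \<alpha> \<beta> \<gamma>)"
  and two: "(2::'a::field) \<noteq> 0"
    and a: "\<alpha> \<noteq> 1/2" and b: "\<beta> \<noteq> 1/2" and c: "\<gamma> \<noteq> 1/2"
  shows "\<forall>j\<in>{1..5}. f (ebasis j) = vscale (f (ebasis j) 3) (vsub (ebasis 3) (ebasis 4))"
    "f (ebasis 1) 3 = f (ebasis 2) 3" "f (ebasis 2) 3 = f (ebasis 5) 3"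
proof -
  have pa: "2*\<alpha> \<noteq> 1" "\<alpha>*2 \<noteq> 1" using a two by (auto simp: field_simps)
  have pb: "2*\<beta> \<noteq> 1" "\<beta>*2 \<noteq> 1" using b two by (auto simp: field_simps)
  have pc: "2*\<gamma> \<noteq> 1" "\<gamma>*2 \<noteq> 1" using c two by (auto simp: field_simps)
  define h where "h = (1/2::'a)"
  note hdef = h_def
  have hh: "2 * h = 1" using two by (simp add: h_def)
  note E = deriv_coord[OF f]
  have "(2*\<alpha>-1) * (f (ebasis 2) 1) = 0" using E[of 2 2 1, unfolded S5 thm6_consts_def hdef[symmetric], simplified EV] 
    using hh by algebra
  hence z12: "f (ebasis 2) 1 = 0" using pa pb pc by simp
  have "(2*\<alpha>-1) * (f (ebasis 1) 2) = 0" using E[of 1 1 2, unfolded S5 thm6_consts_def hdef[symmetric], simplified EV] 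
    using hh by algebra
  hence z21: "f (ebasis 1) 2 = 0" using pa pb pc by simp
  have "(2*\<gamma>-1) * (f (ebasis 5) 1) = 0" using E[of 5 5 1, unfolded S5 thm6_consts_def hdef[symmetric], simplified EV] 
    using hh by algebra
  hence z15: "f (ebasis 5) 1 = 0" using pa pb pc by simp
  have "(2*\<gamma>-1) * (f (ebasis 1) 5) = 0" using E[of 1 1 5, unfolded S5 thm6_consts_def hdef[symmetric], simplified EV] 
    using hh by algebra
  hence z51: "f (ebasis 1) 5 = 0" using pa pb pc by simp
  have "(2*\<beta>-1) * (f (ebasis 5) 2) = 0" using E[of 5 5 2, unfolded S5 thm6_consts_def hdef[symmetric], simplified EV] 
    using hh by algebra
  hence z25: "f (ebasis 5) 2 = 0" using pa pb pc by simp
  have "(2*\<beta>-1) * (f (ebasis 2) 5) = 0" using E[of 2 2 5, unfolded S5 thm6_consts_def hdef[symmetric], simplified EV] 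
    using hh by algebra
  hence z52: "f (ebasis 2) 5 = 0" using pa pb pc by simp
  have c1: "f (ebasis 1) 1 + f (ebasis 1) 3 + f (ebasis 1) 4 = 0" using E[of 1 1 1, unfolded S5 thm6_consts_def hdef[symmetric], simplified EV] z21 z51
    using hh by algebra
  have c2: "f (ebasis 2) 2 + f (ebasis 2) 3 + f (ebasis 2) 4 = 0" using E[of 2 2 2, unfolded S5 thm6_consts_def hdef[symmetric], simplified EV] z12 z52
    using hh by algebra
  have c5: "f (ebasis 5) 5 + f (ebasis 5) 3 + f (ebasis 5) 4 = 0" using E[of 5 5 5, unfolded S5 thm6_consts_def hdef[symmetric], simplified EV] z15 z25
    using hh by algebra
  have c3: "f (ebasis 3) 1 + f (ebasis 3) 2 + f (ebasis 3) 3 + f (ebasis 3) 4 + f (ebasis 3) 5 = 0" using E[of 3 3 3, unfolded S5 thm6_consts_def hdef[symmetric], simplified EV] 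
    using hh by algebra
  have c4: "f (ebasis 4) 1 + f (ebasis 4) 2 + f (ebasis 4) 3 + f (ebasis 4) 4 + f (ebasis 4) 5 = 0" using E[of 4 4 4, unfolded S5 thm6_consts_def hdef[symmetric], simplified EV] 
    using hh by algebra
  have "(2*\<alpha>-1) * (f (ebasis 3) 2) = 0" using E[of 3 1 2, unfolded S5 thm6_consts_def hdef[symmetric], simplified EV] 
    using hh by algebra
  hence z23: "f (ebasis 3) 2 = 0" using pa pb pc by simp
  have "(2*\<gamma>-1) * (f (ebasis 3) 5) = 0" using E[of 3 1 5, unfolded S5 thm6_consts_def hdef[symmetric], simplified EV] 
    using hh by algebra
  hence z53: "f (ebasis 3) 5 = 0" using pa pb pc by simp
  have "(2*\<alpha>-1) * (f (ebasis 3) 1) = 0" using E[of 3 2 1, unfolded S5 thm6_consts_def hdef[symmetric], simplified EV] 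
    using hh by algebra
  hence z13: "f (ebasis 3) 1 = 0" using pa pb pc by simp
  have "(2*\<alpha>-1) * (f (ebasis 4) 2) = 0" using E[of 4 1 2, unfolded S5 thm6_consts_def hdef[symmetric], simplified EV] 
    using hh by algebra
  hence z24: "f (ebasis 4) 2 = 0" using pa pb pc by simp
  have "(2*\<gamma>-1) * (f (ebasis 4) 5) = 0" using E[of 4 1 5, unfolded S5 thm6_consts_def hdef[symmetric], simplified EV] 
    using hh by algebra
  hence z54: "f (ebasis 4) 5 = 0" using pa pb pc by simp
  have "(2*\<alpha>-1) * (f (ebasis 4) 1) = 0" using E[of 4 2 1, unfolded S5 thm6_consts_def hdef[symmetric], simplified EV] 
    using hh by algebra
  hence z14: "f (ebasis 4) 1 = 0" using pa pb pc by simp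
  have "(2*\<alpha>-1) * (f (ebasis 1) 3 - f (ebasis 2) 3) = 0" using E[of 1 2 3, unfolded S5 thm6_consts_def hdef[symmetric], simplified EV] 
    using hh by algebra
  hence r32: "f (ebasis 1) 3 - f (ebasis 2) 3 = 0" using pa pb pc by simp
  have "(2*\<gamma>-1) * (f (ebasis 1) 3 - f (ebasis 5) 3) = 0" using E[of 1 5 3, unfolded S5 thm6_consts_def hdef[symmetric], simplified EV] 
    using hh by algebra
  hence r35: "f (ebasis 1) 3 - f (ebasis 5) 3 = 0" using pa pb pc by simp
  have "(2*\<alpha>-1) * (f (ebasis 2) 2) = 0" using E[of 1 2 1, unfolded S5 thm6_consts_def hdef[symmetric], simplified EV] z12 c2 z52
    using hh by algebra
  hence z22: "f (ebasis 2) 2 = 0" using pa pb pc by simp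
  have "(2*\<alpha>-1) * (f (ebasis 1) 1) = 0" using E[of 2 1 2, unfolded S5 thm6_consts_def hdef[symmetric], simplified EV] z21 c1 z51
    using hh by algebra
  hence z11: "f (ebasis 1) 1 = 0" using pa pb pc by simp
  have "(2*\<gamma>-1) * (f (ebasis 5) 5) = 0" using E[of 1 5 1, unfolded S5 thm6_consts_def hdef[symmetric], simplified EV] z25 c5 z15
    using hh by algebra
  hence z55: "f (ebasis 5) 5 = 0" using pa pb pc by simp
  have L: "LV_linear f" using f unfolding LV_Der_def by auto
  have out: "\<And>j k. j \<in> {1..5} \<Longrightarrow> k \<notin> {1..5} \<Longrightarrow> f (ebasis j) k = 0"
    using L eb_sp unfolding LV_linear_def LV_space_def by blast
  have I: "\<And>k. k \<in> {1..5} \<Longrightarrow> k = 1 \<or> k = 2 \<or> k = 3 \<or> k = 4 \<or> k = (5::nat)" by auto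
  have col: "f (ebasis j) = vscale (f (ebasis j) 3) (vsub (ebasis 3) (ebasis 4))"
    if "f (ebasis j) 1 = 0" "f (ebasis j) 2 = 0" "f (ebasis j) 5 = 0" "f (ebasis j) 4 = - f (ebasis j) 3"
       "j \<in> {1..5}" for j
  proof
    fix k show "f (ebasis j) k = vscale (f (ebasis j) 3) (vsub (ebasis 3) (ebasis 4)) k"
    proof (cases "k \<in> {1..5}")
      case True then show ?thesis using I[OF True] that by (auto simp: vscale_def vsub_def ebasis_def)
    next
      case False then show ?thesis using out[OF that(5) False] by (auto simp: vscale_def vsub_def ebasis_def)
    qed
  qed
  have "f (ebasis 1) 4 = - f (ebasis 1) 3" using c1 z11 by (simp add: eq_neg_iff_add_eq_0 add.commute)
  hence e1: "f (ebasis 1) = vscale (f (ebasis 1) 3) (vsub (ebasis 3) (ebasis 4))" using col z11 z21 z51 by simp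
  have "f (ebasis 2) 4 = - f (ebasis 2) 3" using c2 z22 by (simp add: eq_neg_iff_add_eq_0 add.commute)
  hence e2: "f (ebasis 2) = vscale (f (ebasis 2) 3) (vsub (ebasis 3) (ebasis 4))" using col z12 z22 z52 by simp
  have "f (ebasis 5) 4 = - f (ebasis 5) 3" using c5 z55 by (simp add: eq_neg_iff_add_eq_0 add.commute)
  hence e5: "f (ebasis 5) = vscale (f (ebasis 5) 3) (vsub (ebasis 3) (ebasis 4))" using col z15 z25 z55 by simp
  have "f (ebasis 3) 4 = - f (ebasis 3) 3" using c3 z13 z23 z53 by (simp add: eq_neg_iff_add_eq_0 add.commute)
  hence e3: "f (ebasis 3) = vscale (f (ebasis 3) 3) (vsub (ebasis 3) (ebasis 4))" using col z13 z23 z53 by simp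
  have "f (ebasis 4) 3 = - f (ebasis 4) 4" using c4 z14 z24 z54 by (simp add: eq_neg_iff_add_eq_0 add.commute)
  hence "f (ebasis 4) 4 = - f (ebasis 4) 3" by simp
  hence e4: "f (ebasis 4) = vscale (f (ebasis 4) 3) (vsub (ebasis 3) (ebasis 4))" using col z14 z24 z54 by simp
  show "\<forall>j\<in>{1..5}. f (ebasis j) = vscale (f (ebasis j) 3) (vsub (ebasis 3) (ebasis 4))"
    using I e1 e2 e3 e4 e5 by blast
  show "f (ebasis 1) 3 = f (ebasis 2) 3" "f (ebasis 2) 3 = f (ebasis 5) 3" using r32 r35 by simp_all
qed

lemma mult_sp: "LV_mult a u v \<in> LV_space"
  unfolding LV_space_def LV_mult_def by auto

lemma repr:
  assumes L: "LV_linear f" and bj: "\<forall>j\<in>{1..5}. f (ebasis j) = vscale (f (ebasis j) 3) w"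
    and u: "u \<in> LV_space"
  shows "f u = vscale (\<Sum>j\<in>{1..5}. u j * f (ebasis j) 3) w"
proof
  fix k
  have "f u k = (\<Sum>j\<in>{1..5}. u j * f (ebasis j) k)" using decomp[OF L u] by simp
  also have "\<dots> = (\<Sum>j\<in>{1..5}. u j * f (ebasis j) 3 * w k)"
  proof (rule sum.cong[OF refl])
    fix j assume "j \<in> {1..5::nat}"
    hence "f (ebasis j) = vscale (f (ebasis j) 3) w" using bj by blast
    hence "f (ebasis j) k = vscale (f (ebasis j) 3) w k" by simp
    thus "u j * f (ebasis j) k = u j * f (ebasis j) 3 * w k" by (simp add: vscale_def)
  qed
  also have "\<dots> = vscale (\<Sum>j\<in>{1..5}. u j * f (ebasis j) 3) w k"
    by (simp add: vscale_def sum_distrib_right)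
  finally show "f u k = vscale (\<Sum>j\<in>{1..5}. u j * f (ebasis j) 3) w k" .
qed

lemma key: fixes \<alpha> \<beta> \<gamma> c1 c3 c4 h :: "'a::field"
  assumes two: "(2::'a) \<noteq> 0" and hd: "h = 1/2" and hh: "2 * h = 1" and k: "k \<in> {1..5}"
  shows "(\<Sum>j\<in>{1..5}. LV_mult (thm6_consts \<alpha> \<beta> \<gamma>) u v j * (if j = 3 then c3 else if j = 4 then c4 else c1))
       * vsub (ebasis 3) (ebasis 4) k
   = LV_mult (thm6_consts \<alpha> \<beta> \<gamma>) (vscale (\<Sum>j\<in>{1..5}. u j * (if j = 3 then c3 else if j = 4 then c4 else c1)) (vsub (ebasis 3) (ebasis 4))) v k
   + LV_mult (thm6_consts \<alpha> \<beta> \<gamma>) u (vscale (\<Sum>j\<in>{1..5}. v j * (if j = 3 then c3 else if j = 4 then c4 else c1)) (vsub (ebasis 3) (ebasis 4))) k"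
  using k[unfolded I5] hh unfolding LV_mult_def S5 thm6_consts_def hd[symmetric] vscale_def vsub_def ebasis_def
  apply (simp only: insert_iff empty_iff simp_thms)
  apply (elim disjE; simp only: EV; thin_tac "k = _"; thin_tac "_ = (1::'a)"; simp only: hh[symmetric]; simp add: algebra_simps)
  done

lemma vs_app: "vscale c u i = c * u i" by (simp add: vscale_def)
lemma va_app: "vadd u v i = u i + v i" by (simp add: vadd_def)

theorem mainTheorem6:
  fixes \<alpha> \<beta> \<gamma> :: "'a::field"
  assumes "(2::'a) \<noteq> 0"
    and "\<alpha> \<noteq> 1/2" and "\<beta> \<noteq> 1/2" and "\<gamma> \<noteq> 1/2"
  shows "LV_Der (thm6_consts \<alpha> \<beta> \<gamma>) =
    {f. LV_linear f
        \<and> (\<forall>u\<in>LV_space. \<exists>c. f u = vscale c (vsub (ebasis 3) (ebasis 4)))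
        \<and> f (ebasis 1) = f (ebasis 2) \<and> f (ebasis 2) = f (ebasis 5)}"
proof (rule set_eqI, rule iffI)
  let ?a = "thm6_consts \<alpha> \<beta> \<gamma>" and ?w = "vsub (ebasis 3) (ebasis 4) :: nat \<Rightarrow> 'a"
  fix f :: "(nat \<Rightarrow> 'a) \<Rightarrow> nat \<Rightarrow> 'a" assume f: "f \<in> LV_Der ?a"
  have L: "LV_linear f" using f by (simp add: LV_Der_def)
  note B = der_basis[OF f assms]
  have img: "\<forall>u\<in>LV_space. \<exists>c. f u = vscale c ?w" using repr[OF L B(1)] by blast
  have "f (ebasis 1) = f (ebasis 2)" "f (ebasis 2) = f (ebasis 5)"
    using B(1)[rule_format, of 1] B(1)[rule_format, of 2] B(1)[rule_format, of 5] B(2,3) by simp_all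
  with L img show "f \<in> {f. LV_linear f
        \<and> (\<forall>u\<in>LV_space. \<exists>c. f u = vscale c (vsub (ebasis 3) (ebasis 4)))
        \<and> f (ebasis 1) = f (ebasis 2) \<and> f (ebasis 2) = f (ebasis 5)}" by simp
next
  let ?a = "thm6_consts \<alpha> \<beta> \<gamma>" and ?w = "vsub (ebasis 3) (ebasis 4) :: nat \<Rightarrow> 'a"
  fix f :: "(nat \<Rightarrow> 'a) \<Rightarrow> nat \<Rightarrow> 'a" assume "f \<in> {f. LV_linear f
        \<and> (\<forall>u\<in>LV_space. \<exists>c. f u = vscale c (vsub (ebasis 3) (ebasis 4)))
        \<and> f (ebasis 1) = f (ebasis 2) \<and> f (ebasis 2) = f (ebasis 5)}"
  then have L: "LV_linear f" and img: "\<forall>u\<in>LV_space. \<exists>c. f u = vscale c ?w"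
    and e12: "f (ebasis 1) = f (ebasis 2)" and e25: "f (ebasis 2) = f (ebasis 5)" by auto
  have bj: "\<forall>j\<in>{1..5}. f (ebasis j) = vscale (f (ebasis j) 3) ?w"
  proof
    fix j :: nat assume j: "j \<in> {1..5}"
    obtain c where c: "f (ebasis j) = vscale c ?w" using img eb_sp[OF j] by blast
    hence "f (ebasis j) 3 = c" by (simp add: vscale_def vsub_def ebasis_def)
    with c show "f (ebasis j) = vscale (f (ebasis j) 3) ?w" by simp
  qed
  define c1 where "c1 = f (ebasis 1) 3"
  define c3 where "c3 = f (ebasis 3) 3"
  define c4 where "c4 = f (ebasis 4) 3"
  have e2: "f (ebasis 2) 3 = c1" using e12 c1_def by simp
  have e5: "f (ebasis 5) 3 = c1" using e12 e25 c1_def by simp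
  have cc: "f x = vscale (\<Sum>j\<in>{1..5}. x j * (if j = 3 then c3 else if j = 4 then c4 else c1)) ?w"
    if x: "x \<in> LV_space" for x
    using repr[OF L bj x] unfolding S5 by (simp add: c1_def c3_def c4_def e2 e5)
  have two: "(2::'a) \<noteq> 0" by (rule assms(1))
  have hh: "2 * (1/2::'a) = 1" using two by simp
  show "f \<in> LV_Der ?a" unfolding LV_Der_def
  proof (intro CollectI conjI ballI L)
    fix u v :: "nat \<Rightarrow> 'a" assume u: "u \<in> LV_space" and v: "v \<in> LV_space"
    show "f (LV_mult ?a u v) = vadd (LV_mult ?a (f u) v) (LV_mult ?a u (f v))"
      unfolding cc[OF mult_sp] cc[OF u] cc[OF v]
    proof
      fix k
      show "vscale (\<Sum>j\<in>{1..5}. LV_mult ?a u v j * (if j = 3 then c3 else if j = 4 then c4 else c1)) ?w k =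
         vadd (LV_mult ?a (vscale (\<Sum>j\<in>{1..5}. u j * (if j = 3 then c3 else if j = 4 then c4 else c1)) ?w) v)
          (LV_mult ?a u (vscale (\<Sum>j\<in>{1..5}. v j * (if j = 3 then c3 else if j = 4 then c4 else c1)) ?w)) k"
      proof (cases "k \<in> {1..5}")
        case True
        show ?thesis by (subst vs_app, subst va_app, rule key[OF two refl hh True])
      next
        case False
        have m0: "\<And>x y. LV_mult ?a x y k = 0" using False unfolding LV_mult_def by auto
        have "?w k = 0" using False by (auto simp: vsub_def ebasis_def)
        then show ?thesis by (simp add: vs_app va_app m0)
      qed
    qed
  qed
qed

end
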